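(* Let $w,v\in\Sigma^+$ be primitive words. The following are equivalent: (1) $w$ and $v$ are co-primitive; (2) there exist $n_0,m_0\in\mathbb{N}$ such that $\mathsf{Facs}(w^{n_0})\cap\mathsf{Facs}(v^{m_0})=\mathsf{Facs}(w^{n})\cap\mathsf{Facs}(v^{m})$ for all $n>n_0$ and all $m>m_0$; (3) there exists $r\in\mathbb{N}$ such that $r\ge\max\{|x| : x\in\mathsf{Facs}(w^n)\cap\mathsf{Facs}(v^m)\}$ for all $n,m\in\mathbb{N}$.
   Context: $\mathsf{Facs}(w)$ is the set of all factors of $w$. A word $w\in\Sigma^+$ is primitive if there is no $z\in\Sigma^*$ and $k>1$ with $w=z^k$. Two words $w,v\in\Sigma^+$ are conjugate if there exist $x,y\in\Sigma^*$ with $w=xy$ and $v=yx$. Two words are co-primitive if both are primitive and they are not conjugate. *)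

theory Defs
  imports Main "HOL-Library.Sublist"
begin

definition pow :: "'a list \<Rightarrow> nat \<Rightarrow> 'a list" where
  "pow w n = concat (replicate n w)"

definition Facs :: "'a list \<Rightarrow> 'a list set" where
  "Facs w = {x. sublist x w}"

definition primitive :: "'a list \<Rightarrow> bool" where
  "primitive w \<longleftrightarrow> w \<noteq> [] \<and> \<not> (\<exists>z k. k > 1 \<and> w = pow z k)"

definition conjugate :: "'a list \<Rightarrow> 'a list \<Rightarrow> bool" where
  "conjugate w v \<longleftrightarrow> w \<noteq> [] \<and> v \<noteq> [] \<and> (\<exists>x y. w = x @ y \<and> v = y @ x)"

definition coprimitive :: "'a list \<Rightarrow> 'a list \<Rightarrow> bool" where
  "coprimitive w v \<longleftrightarrow> primitive w \<and> primitive v \<and> \<not> conjugate w v"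

end

theory Submission imports Defs begin

lemma pow_Suc[simp]: "pow w (Suc n) = w @ pow w n" by (simp add: pow_def)
lemma pow_0[simp]: "pow w 0 = []" by (simp add: pow_def)
lemma pow_1: "pow w 1 = w" by (simp add: pow_def)
lemma length_pow[simp]: "length (pow w n) = n * length w" by (induct n) auto

lemma nth_pow: "i < n * length z \<Longrightarrow> pow z n ! i = z ! (i mod length z)"
proof (induct n arbitrary: i)
  case 0 then show ?case by simp
next
  case (Suc n)
  show ?case
  proof (cases "i < length z")
    case True then show ?thesis by (simp add: nth_append)
  next
    case False
    then have "i - length z < n * length z" using Suc.prems by auto
    then show ?thesis using False Suc.hyps by (simp add: nth_append le_mod_geq)
  qed
qed

lemma pow_Suc2: "pow w (Suc n) = pow w n @ w" by (induct n) auto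

lemma pow_prefix: "n \<le> n' \<Longrightarrow> prefix (pow w n) (pow w n')"
proof (induct n' )
  case 0 then show ?case by simp
next
  case (Suc n') then show ?case
    by (cases "n = Suc n'") (auto simp: pow_Suc2 prefix_def simp del: pow_Suc)
qed

lemma sublist_trans': "sublist a b \<Longrightarrow> sublist b c \<Longrightarrow> sublist a c"
  by (metis sublist_order.order_trans)

lemma pow_conj: "pow (x@y) (Suc m) = x @ pow (y@x) m @ y"
  by (induct m) auto

definition R :: "'a list \<Rightarrow> nat \<Rightarrow> 'a list \<Rightarrow> bool" where
  "R w k x \<longleftrightarrow> (\<forall>i<length x. x ! i = w ! ((k + i) mod length w))"

lemma factor_R: "w \<noteq> [] \<Longrightarrow> sublist x (pow w n) \<Longrightarrow> \<exists>k. R w k x"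
proof -
  assume w: "w \<noteq> []" and s: "sublist x (pow w n)"
  then obtain a b where ab: "pow w n = a @ x @ b" by (auto simp: sublist_def)
  have "R w (length a) x" unfolding R_def
  proof (intro allI impI)
    fix i assume i: "i < length x"
    have "pow w n ! (length a + i) = x ! i" using ab i by (simp add: nth_append)
    moreover have "length a + i < n * length w" using ab i
      by (metis length_append length_pow add_less_cancel_left less_le_trans le_add1)
    ultimately show "x ! i = w ! ((length a + i) mod length w)" using nth_pow by metis
  qed
  then show ?thesis by blast
qed

lemma R_mod: "R w k x \<Longrightarrow> R w (k mod length w) x"
  unfolding R_def by (simp add: mod_add_left_eq)

lemma R_factor: "w \<noteq> [] \<Longrightarrow> R w k x \<Longrightarrow> k < length w \<Longrightarrow> length x + length w \<le> N * length w
   \<Longrightarrow> sublist x (pow w N)"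
proof -
  assume w: "w \<noteq> []" and r: "R w k x" and k: "k < length w" and N: "length x + length w \<le> N * length w"
  have "x = take (length x) (drop k (pow w N))"
  proof (rule nth_equalityI)
    show "length x = length (take (length x) (drop k (pow w N)))" using k N by simp
    fix i assume i: "i < length x"
    have "k + i < N * length w" using i k N by linarith
    then show "x ! i = take (length x) (drop k (pow w N)) ! i"
      using r i unfolding R_def by (simp add: nth_pow)
  qed
  then show ?thesis
    by (metis append_take_drop_id sublist_appendI)
qed

lemma rotate_pow: "z \<noteq> [] \<Longrightarrow> rotate m (pow z a) = pow (rotate m z) a"
proof (rule nth_equalityI)
  assume z: "z \<noteq> []"
  show "length (rotate m (pow z a)) = length (pow (rotate m z) a)" by simp
  fix i assume "i < length (rotate m (pow z a))"
  then have i: "i < a * length z" by simp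
  have pos: "0 < a * length z" using i by (rule le_less_trans[OF le0])
  have "rotate m (pow z a) ! i = pow z a ! ((m + i) mod (a * length z))"
    using i by (simp add: nth_rotate)
  also have "\<dots> = z ! (((m + i) mod (a * length z)) mod length z)"
    using pos by (intro nth_pow) simp
  also have "\<dots> = z ! ((m + i) mod length z)"
    by (simp add: mod_mod_cancel)
  finally have 1: "rotate m (pow z a) ! i = z ! ((m + i) mod length z)" .
  have "pow (rotate m z) a ! i = rotate m z ! (i mod length z)"
    using i by (simp add: nth_pow)
  also have "\<dots> = z ! ((m + i mod length z) mod length z)"
    using z by (simp add: nth_rotate)
  also have "\<dots> = z ! ((m + i) mod length z)" by (simp add: mod_add_right_eq)
  finally show "rotate m (pow z a) ! i = pow (rotate m z) a ! i" using 1 by simp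
qed

lemma rotate_back: "\<exists>j. rotate j (rotate k w) = w"
proof (cases "w = []")
  case True then show ?thesis by simp
next
  case False
  have "(length w - k mod length w + k) mod length w = 0"
  proof -
    have a: "k mod length w < length w" using False by simp
    have b: "length w * (k div length w) + k mod length w = k" by (rule mult_div_mod_eq)
    have "length w - k mod length w + k = length w + length w * (k div length w)"
      using a b by linarith
    also have "\<dots> = length w * (Suc (k div length w))" by simp
    finally have "length w - k mod length w + k = length w * (Suc (k div length w))" .
    then show ?thesis by simp
  qed
  then show ?thesis by (metis rotate_rotate rotate_id)
qed

lemma primitive_rotate: "primitive w \<Longrightarrow> primitive (rotate k w)"
proof -
  assume p: "primitive w"
  then have w: "w \<noteq> []" by (simp add: primitive_def)
  show ?thesis
  proof (rule ccontr)
    assume "\<not> primitive (rotate k w)"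
    then obtain z a where za: "a > 1" "rotate k w = pow z a" using w by (auto simp: primitive_def)
    have "z \<noteq> []" using za w by (metis length_0_conv length_pow length_rotate mult_0_right)
    obtain j where "rotate j (rotate k w) = w" using rotate_back by blast
    then have "w = pow (rotate j z) a" using za rotate_pow[OF \<open>z \<noteq> []\<close>] by metis
    then show False using p za by (auto simp: primitive_def)
  qed
qed

lemma conj_rotate: "w \<noteq> [] \<Longrightarrow> conjugate w (rotate t w)"
  unfolding conjugate_def
  by (metis append_take_drop_id rotate_drop_take length_rotate length_0_conv)

lemma key:
  assumes pw: "primitive w" and pv: "primitive v"
    and rw: "R w k x" and rv: "R v l x" and len: "length w + length v \<le> length x"
  shows "conjugate w v"
proof -
  have w: "w \<noteq> []" and v: "v \<noteq> []" using pw pv by (auto simp: primitive_def)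
  define p where "p = rotate k w"
  define q where "q = rotate l v"
  have pn: "i < length w \<Longrightarrow> p ! i = x ! i" for i
    using rw len unfolding R_def p_def by (simp add: nth_rotate)
  have qn: "i < length v \<Longrightarrow> q ! i = x ! i" for i
    using rv len unfolding R_def q_def by (simp add: nth_rotate)
  have pq: "p @ q = take (length w + length v) x"
  proof (rule nth_equalityI)
    show "length (p @ q) = length (take (length w + length v) x)" using len by (simp add: p_def q_def)
    fix i assume "i < length (p @ q)"
    then have i: "i < length w + length v" by (simp add: p_def q_def)
    show "(p @ q) ! i = take (length w + length v) x ! i"
    proof (cases "i < length w")
      case True then show ?thesis using pn i by (simp add: nth_append p_def)
    next
      case False
      have "q ! (i - length w) = x ! (i - length w)" using qn i False by simp
      also have "\<dots> = w ! ((k + (i - length w)) mod length w)" using rw i len unfolding R_def by simp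
      also have "\<dots> = w ! ((k + i) mod length w)" using False
        by (metis add_diff_inverse_nat mod_add_self2 add.assoc add.commute)
      also have "\<dots> = x ! i" using rw i len unfolding R_def by simp
      finally show ?thesis using False i by (simp add: nth_append p_def)
    qed
  qed
  have qp: "q @ p = take (length w + length v) x"
  proof (rule nth_equalityI)
    show "length (q @ p) = length (take (length w + length v) x)" using len by (simp add: p_def q_def)
    fix i assume "i < length (q @ p)"
    then have i: "i < length w + length v" by (simp add: p_def q_def)
    show "(q @ p) ! i = take (length w + length v) x ! i"
    proof (cases "i < length v")
      case True then show ?thesis using qn i by (simp add: nth_append q_def)
    next
      case False
      have "p ! (i - length v) = x ! (i - length v)" using pn i False by simp
      also have "\<dots> = v ! ((l + (i - length v)) mod length v)" using rv i len unfolding R_def by simp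
      also have "\<dots> = v ! ((l + i) mod length v)" using False
        by (metis add_diff_inverse_nat mod_add_self2 add.assoc add.commute)
      also have "\<dots> = x ! i" using rv i len unfolding R_def by simp
      finally show ?thesis using False i by (simp add: nth_append q_def)
    qed
  qed
  obtain a b z where za: "pow z a = p" and zb: "pow z b = q"
    using comm_append_are_replicate[of p q] pq qp unfolding pow_def by metis
  have prp: "primitive p" "primitive q" using primitive_rotate pw pv p_def q_def by auto
  have "a = 1"
  proof -
    have "a \<noteq> 0" using za prp(1) by (cases a) (auto simp: primitive_def)
    moreover have "\<not> a > 1" using za prp by (auto simp: primitive_def)
    ultimately show ?thesis by simp
  qed
  have "b = 1"
  proof -
    have "b \<noteq> 0" using zb prp(2) by (cases b) (auto simp: primitive_def)
    moreover have "\<not> b > 1" using zb prp by (auto simp: primitive_def)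
    ultimately show ?thesis by simp
  qed
  then have "p = q" using \<open>a = 1\<close> za zb by simp
  obtain j where "rotate j q = v" using rotate_back q_def by blast
  then have "v = rotate (j + k) w" using \<open>p = q\<close> p_def by (metis rotate_rotate)
  then show ?thesis using conj_rotate w by simp
qed


lemma bound:
  assumes c: "coprimitive w v" and s1: "sublist x (pow w n)" and s2: "sublist x (pow v m)"
  shows "length x \<le> length w + length v"
proof (rule ccontr)
  assume nt: "\<not> length x \<le> length w + length v"
  have pw: "primitive w" and pv: "primitive v" using c by (auto simp: coprimitive_def)
  then have "w \<noteq> []" "v \<noteq> []" by (auto simp: primitive_def)
  then obtain k l where "R w k x" "R v l x" using factor_R s1 s2 by metis
  then have "conjugate w v" using key[of w v k x l] pw pv nt by linarith
  then show False using c by (simp add: coprimitive_def)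
qed

lemma conj_factor: "conjugate w v \<Longrightarrow> sublist (pow v m) (pow w (Suc m))"
  unfolding conjugate_def using pow_conj by (metis sublist_appendI)

lemma factor_big: "w \<noteq> [] \<Longrightarrow> sublist x (pow w n) \<Longrightarrow> length x \<le> L \<Longrightarrow> L + length w \<le> N * length w
   \<Longrightarrow> sublist x (pow w N)"
proof -
  assume w: "w \<noteq> []" and s: "sublist x (pow w n)" and L: "length x \<le> L" "L + length w \<le> N * length w"
  obtain k where "R w k x" using factor_R w s by blast
  then have "R w (k mod length w) x" by (rule R_mod)
  moreover have "k mod length w < length w" using w by simp
  ultimately show ?thesis using R_factor w L by (metis add_le_mono1 le_trans)
qed

theorem lemma4p11:
  fixes w v :: "'a list"
  assumes "primitive w" and "primitive v"
  shows "(coprimitive w v \<longleftrightarrow>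
            (\<exists>n0 m0 :: nat. \<forall>n m. n > n0 \<longrightarrow> m > m0 \<longrightarrow>
               Facs (pow w n0) \<inter> Facs (pow v m0) = Facs (pow w n) \<inter> Facs (pow v m)))
       \<and> (coprimitive w v \<longleftrightarrow>
            (\<exists>r :: nat. \<forall>n m :: nat. \<forall>x \<in> Facs (pow w n) \<inter> Facs (pow v m). length x \<le> r))"
proof -
  have w: "w \<noteq> []" and v: "v \<noteq> []" using assms by (auto simp: primitive_def)
  have notc: "\<not> coprimitive w v \<Longrightarrow> conjugate w v" using assms by (simp add: coprimitive_def)
  have A: "coprimitive w v \<longleftrightarrow>
            (\<exists>n0 m0 :: nat. \<forall>n m. n > n0 \<longrightarrow> m > m0 \<longrightarrow>
               Facs (pow w n0) \<inter> Facs (pow v m0) = Facs (pow w n) \<inter> Facs (pow v m))"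
  proof
    assume c: "coprimitive w v"
    define n0 where "n0 = 2 + length v"
    define m0 where "m0 = 2 + length w"
    have "\<forall>n m. n > n0 \<longrightarrow> m > m0 \<longrightarrow>
               Facs (pow w n0) \<inter> Facs (pow v m0) = Facs (pow w n) \<inter> Facs (pow v m)"
    proof (intro allI impI)
      fix n m assume n: "n > n0" and m: "m > m0"
      show "Facs (pow w n0) \<inter> Facs (pow v m0) = Facs (pow w n) \<inter> Facs (pow v m)"
      proof
        show "Facs (pow w n0) \<inter> Facs (pow v m0) \<subseteq> Facs (pow w n) \<inter> Facs (pow v m)"
          using pow_prefix[of n0 n w] pow_prefix[of m0 m v] n m
          by (auto simp: Facs_def intro: sublist_trans')
        show "Facs (pow w n) \<inter> Facs (pow v m) \<subseteq> Facs (pow w n0) \<inter> Facs (pow v m0)"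
        proof
          fix x assume "x \<in> Facs (pow w n) \<inter> Facs (pow v m)"
          then have s1: "sublist x (pow w n)" and s2: "sublist x (pow v m)" by (auto simp: Facs_def)
          have b: "length x \<le> length w + length v" using bound c s1 s2 by blast
          have "length w + length v + length w \<le> n0 * length w"
            using w unfolding n0_def by (cases "length w") (auto simp: algebra_simps)
          then have 1: "sublist x (pow w n0)" using factor_big[OF w s1 b] by blast
          have "length w + length v + length v \<le> m0 * length v"
            using v unfolding m0_def by (cases "length v") (auto simp: algebra_simps)
          then have 2: "sublist x (pow v m0)" using factor_big[OF v s2 b] by blast
          show "x \<in> Facs (pow w n0) \<inter> Facs (pow v m0)" using 1 2 by (simp add: Facs_def)
        qed
      qed
    qed
    then show "\<exists>n0 m0 :: nat. \<forall>n m. n > n0 \<longrightarrow> m > m0 \<longrightarrow>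
               Facs (pow w n0) \<inter> Facs (pow v m0) = Facs (pow w n) \<inter> Facs (pow v m)" by blast
  next
    assume "\<exists>n0 m0 :: nat. \<forall>n m. n > n0 \<longrightarrow> m > m0 \<longrightarrow>
               Facs (pow w n0) \<inter> Facs (pow v m0) = Facs (pow w n) \<inter> Facs (pow v m)"
    then obtain n0 m0 where H: "\<forall>n m. n > n0 \<longrightarrow> m > m0 \<longrightarrow>
               Facs (pow w n0) \<inter> Facs (pow v m0) = Facs (pow w n) \<inter> Facs (pow v m)" by blast
    show "coprimitive w v"
    proof (rule ccontr)
      assume "\<not> coprimitive w v"
      then have cj: "conjugate w v" by (rule notc)
      define m where "m = m0 + n0 * length w + 1"
      define n where "n = n0 + m + 1"
      have "sublist (pow v m) (pow w (Suc m))" using cj by (rule conj_factor)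
      moreover have "prefix (pow w (Suc m)) (pow w n)" by (rule pow_prefix) (simp add: n_def)
      ultimately have "sublist (pow v m) (pow w n)" by (meson prefix_imp_sublist sublist_trans')
      then have "pow v m \<in> Facs (pow w n) \<inter> Facs (pow v m)" by (simp add: Facs_def)
      moreover have "n > n0" "m > m0" by (simp_all add: n_def m_def)
      ultimately have "pow v m \<in> Facs (pow w n0)" using H by blast
      then have "m * length v \<le> n0 * length w" by (auto simp: Facs_def dest: sublist_length_le)
      moreover have "m \<le> m * length v" using v by (cases v) auto
      ultimately show False unfolding m_def by linarith
    qed
  qed
  have B: "coprimitive w v \<longleftrightarrow>
            (\<exists>r :: nat. \<forall>n m :: nat. \<forall>x \<in> Facs (pow w n) \<inter> Facs (pow v m). length x \<le> r)"
  proof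
    assume c: "coprimitive w v"
    have "\<forall>n m :: nat. \<forall>x \<in> Facs (pow w n) \<inter> Facs (pow v m). length x \<le> length w + length v"
      using bound[OF c] by (auto simp: Facs_def)
    then show "\<exists>r :: nat. \<forall>n m :: nat. \<forall>x \<in> Facs (pow w n) \<inter> Facs (pow v m). length x \<le> r" by blast
  next
    assume "\<exists>r :: nat. \<forall>n m :: nat. \<forall>x \<in> Facs (pow w n) \<inter> Facs (pow v m). length x \<le> r"
    then obtain r where H: "\<forall>n m :: nat. \<forall>x \<in> Facs (pow w n) \<inter> Facs (pow v m). length x \<le> r" by blast
    show "coprimitive w v"
    proof (rule ccontr)
      assume "\<not> coprimitive w v"
      then have cj: "conjugate w v" by (rule notc)
      have "sublist (pow v (Suc r)) (pow w (Suc (Suc r)))" using cj by (rule conj_factor)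
      then have "pow v (Suc r) \<in> Facs (pow w (Suc (Suc r))) \<inter> Facs (pow v (Suc r))" by (simp add: Facs_def)
      then have "length (pow v (Suc r)) \<le> r" using H by blast
      moreover have "Suc r \<le> Suc r * length v" using v by (cases v) auto
      ultimately show False by simp
    qed
  qed
  show ?thesis using A B by blast
qed

end
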